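(* $\sqrt[3]{2}\notin\mathbb F_0$. Equivalently, given the points $(0,0)$ and $(0,1)$, one cannot construct by origami two points at distance $\sqrt[3]{2}$, so a cube with twice the volume of the unit cube cannot be constructed by origami.
   Context: An origami pair is a pair $(\mathcal P,\mathcal L)$ where $\mathcal P\subset\mathbb R^2$ is a set of points and $\mathcal L$ is a collection of lines in $\mathbb R^2$ such that: (i) the intersection point of any two non-parallel lines of $\mathcal L$ lies in $\mathcal P$; (ii) for any two distinct points of $\mathcal P$, the line through them is in $\mathcal L$; (iii) for any two distinct points of $\mathcal P$, the perpendicular bisector of the segment joining them is in $\mathcal L$; (iv) if $L_1,L_2\in\mathcal L$, then every line equidistant from $L_1$ and $L_2$ is in $\mathcal L$ (the midline if they are parallel, the angle bisectors if they intersect); (v) if $L_1,L_2\in\mathcal L$, then the mirror reflection of $L_2$ across $L_1$ is in $\mathcal L$. A set $\mathcal P\subset\mathbb R^2$ is closed under origami constructions if there is a collection of lines $\mathcal L$ with $(\mathcal P,\mathcal L)$ an origami pair. The set of origami constructible points is $\mathcal P_0=\bigcap\{\mathcal P : (0,0),(0,1)\in\mathcal P \text{ and } \mathcal P \text{ is closed under origami constructions}\}$. The set of origami numbers is $\mathbb F_0=\{\alpha\in\mathbb R : \exists v_1,v_2\in\mathcal P_0,\ |\alpha|=\operatorname{dist}(v_1,v_2)\}$. *)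

theory Defs
  imports "HOL-Analysis.Analysis"
begin

type_synonym point = "real \<times> real"

definition line_through :: "point \<Rightarrow> point \<Rightarrow> point set" where
  "line_through p q = {p + t *\<^sub>R (q - p) | t. True}"

definition is_line :: "point set \<Rightarrow> bool" where
  "is_line L \<longleftrightarrow> (\<exists>p q. p \<noteq> q \<and> L = line_through p q)"

definition parallel_lines :: "point set \<Rightarrow> point set \<Rightarrow> bool" where
  "parallel_lines L1 L2 \<longleftrightarrow> L1 = L2 \<or> L1 \<inter> L2 = {}"

definition perp_bisector :: "point \<Rightarrow> point \<Rightarrow> point set" where
  "perp_bisector p q = {x. dist x p = dist x q}"

definition reflect_pt :: "point set \<Rightarrow> point \<Rightarrow> point" where
  "reflect_pt L x = 2 *\<^sub>R closest_point L x - x"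

definition equidistant_line :: "point set \<Rightarrow> point set \<Rightarrow> point set \<Rightarrow> bool" where
  "equidistant_line L1 L2 M \<longleftrightarrow> is_line M \<and> (\<forall>x\<in>M. infdist x L1 = infdist x L2)"

definition origami_pair :: "point set \<Rightarrow> point set set \<Rightarrow> bool" where
  "origami_pair P \<L> \<longleftrightarrow>
     (\<forall>L\<in>\<L>. is_line L) \<and>
     (\<forall>L1\<in>\<L>. \<forall>L2\<in>\<L>. \<not> parallel_lines L1 L2 \<longrightarrow> L1 \<inter> L2 \<subseteq> P) \<and>
     (\<forall>p\<in>P. \<forall>q\<in>P. p \<noteq> q \<longrightarrow> line_through p q \<in> \<L>) \<and>
     (\<forall>p\<in>P. \<forall>q\<in>P. p \<noteq> q \<longrightarrow> perp_bisector p q \<in> \<L>) \<and>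
     (\<forall>L1\<in>\<L>. \<forall>L2\<in>\<L>. L1 \<noteq> L2 \<longrightarrow> (\<forall>M. equidistant_line L1 L2 M \<longrightarrow> M \<in> \<L>)) \<and>
     (\<forall>L1\<in>\<L>. \<forall>L2\<in>\<L>. reflect_pt L1 ` L2 \<in> \<L>)"

definition closed_under_origami :: "point set \<Rightarrow> bool" where
  "closed_under_origami P \<longleftrightarrow> (\<exists>\<L>. origami_pair P \<L>)"

definition origami_points :: "point set" where
  "origami_points = \<Inter>{P. (0,0) \<in> P \<and> (0,1) \<in> P \<and> closed_under_origami P}"

definition origami_numbers :: "real set" where
  "origami_numbers = {\<alpha>. \<exists>v1\<in>origami_points. \<exists>v2\<in>origami_points. \<bar>\<alpha>\<bar> = dist v1 v2}"

end

theory Submission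
  imports Defs
begin


inductive twr :: "real set \<Rightarrow> bool" where
  twr_Q: "twr \<rat>"
| twr_ext: "twr K \<Longrightarrow> k \<in> K \<Longrightarrow> 0 \<le> k \<Longrightarrow> twr {a + b * sqrt k | a b. a \<in> K \<and> b \<in> K}"

definition subfld :: "real set \<Rightarrow> bool" where
  "subfld K \<longleftrightarrow> \<rat> \<subseteq> K \<and> (\<forall>x\<in>K. \<forall>y\<in>K. x + y \<in> K \<and> x * y \<in> K) \<and> (\<forall>x\<in>K. - x \<in> K \<and> inverse x \<in> K)"

lemma m0: fixes a b s :: real shows "(a + b * s) * (a - b * s) = a * a - b * b * (s * s)"
  by (simp add: algebra_simps)
lemma m2: fixes a b s D :: real shows "D \<noteq> 0 \<Longrightarrow> (a + b * s) * (a - b * s) = D \<Longrightarrow> inverse (a + b * s) = a * inverse D + (- b * inverse D) * s"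
proof -
  assume D: "D \<noteq> 0" "(a + b * s) * (a - b * s) = D"
  have "(a + b * s) * (a * inverse D + (- b * inverse D) * s) = ((a + b * s) * (a - b * s)) * inverse D"
    by (simp add: algebra_simps)
  also have "\<dots> = 1" using D by simp
  finally show ?thesis by (rule inverse_unique)
qed

lemma memE: "a \<in> K \<Longrightarrow> b \<in> K \<Longrightarrow> z = a + b * s \<Longrightarrow> z \<in> {a + b * s | a b. a \<in> K \<and> b \<in> K}"
  by blast

lemma subfld_ext:
  assumes K: "subfld K" and k: "k \<in> K" "0 \<le> k"
  shows "subfld {a + b * sqrt k | a b. a \<in> K \<and> b \<in> K}" (is "subfld ?E")
proof -
  define s where "s = sqrt k"
  have ss: "s * s = k" using k unfolding s_def by simp
  have add: "x \<in> K \<Longrightarrow> y \<in> K \<Longrightarrow> x + y \<in> K" for x y using K unfolding subfld_def by blast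
  have mul: "x \<in> K \<Longrightarrow> y \<in> K \<Longrightarrow> x * y \<in> K" for x y using K unfolding subfld_def by blast
  have neg: "x \<in> K \<Longrightarrow> - x \<in> K" for x using K unfolding subfld_def by blast
  have inv: "x \<in> K \<Longrightarrow> inverse x \<in> K" for x using K unfolding subfld_def by blast
  have Q: "\<rat> \<subseteq> K" using K unfolding subfld_def by blast
  have z: "0 \<in> K" using Q by auto
  have KE: "x \<in> ?E" if "x \<in> K" for x by (rule memE[OF that z]) simp
  have E: "?E = {a + b * s | a b. a \<in> K \<and> b \<in> K}" unfolding s_def ..
  have R1: "\<rat> \<subseteq> ?E" using Q KE by blast
  have R2: "x + y \<in> ?E \<and> x * y \<in> ?E" if xy: "x \<in> ?E" "y \<in> ?E" for x y
  proof -
    obtain a b c d where x: "x = a + b * s" "a \<in> K" "b \<in> K" and y: "y = c + d * s" "c \<in> K" "d \<in> K"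
      using xy unfolding E by blast
    have "x + y = (a + c) + (b + d) * s" using x y by (simp add: algebra_simps)
    hence 1: "x + y \<in> ?E" unfolding E by (rule memE[OF add[OF x(2) y(2)] add[OF x(3) y(3)]])
    have "x * y = (a * c + b * d * (s * s)) + (a * d + b * c) * s"
      unfolding x(1) y(1) by (simp add: algebra_simps)
    hence "x * y = (a * c + b * d * k) + (a * d + b * c) * s" unfolding ss .
    hence 2: "x * y \<in> ?E" unfolding E
      by (rule memE[OF add[OF mul[OF x(2) y(2)] mul[OF mul[OF x(3) y(3)] k(1)]] add[OF mul[OF x(2) y(3)] mul[OF x(3) y(2)]]])
    from 1 2 show ?thesis ..
  qed
  have R3: "- x \<in> ?E \<and> inverse x \<in> ?E" if xE: "x \<in> ?E" for x
  proof -
    obtain a b where x: "x = a + b * s" "a \<in> K" "b \<in> K" using xE unfolding E by blast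
    have "- x = (- a) + (- b) * s" using x by simp
    hence 1: "- x \<in> ?E" unfolding E by (rule memE[OF neg[OF x(2)] neg[OF x(3)]])
    define D where "D = a * a - b * b * k"
    have DK: "D \<in> K" unfolding D_def diff_conv_add_uminus
      by (rule add[OF mul[OF x(2) x(2)] neg[OF mul[OF mul[OF x(3) x(3)] k(1)]]])
    have "inverse x \<in> ?E"
    proof (cases "D = 0")
      case False
      have "(a + b * s) * (a - b * s) = D" unfolding D_def m0 ss ..
      hence "inverse x = a * inverse D + (- b * inverse D) * s" unfolding x(1) by (rule m2[OF False])
      then show ?thesis unfolding E by (rule memE[OF mul[OF x(2) inv[OF DK]] mul[OF neg[OF x(3)] inv[OF DK]]])
    next
      case True
      show ?thesis
      proof (cases "b = 0")
        case True
        with \<open>D = 0\<close> have "a = 0" unfolding D_def by simp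
        with True x have "inverse x = 0 + 0 * s" by simp
        then show ?thesis unfolding E by (rule memE[OF z z])
      next
        case False
        have "a * a = b * b * k" using \<open>D = 0\<close> unfolding D_def by simp
        hence "(a / b) * (a / b) = k" using False by (simp add: divide_simps)
        hence "s * s = (a / b) * (a / b)" using ss by simp
        hence "s = a / b \<or> s = - (a / b)" by (rule square_eq_iff[THEN iffD1])
        moreover have abK: "a / b \<in> K" unfolding divide_inverse by (rule mul[OF x(2) inv[OF x(3)]])
        ultimately have sK: "s \<in> K" using neg by auto
        have "x \<in> K" unfolding x(1) by (rule add[OF x(2) mul[OF x(3) sK]])
        hence "inverse x \<in> K" by (rule inv)
        then show ?thesis by (rule KE)
      qed
    qed
    with 1 show ?thesis ..
  qed
  show ?thesis unfolding subfld_def using R1 R2 R3 by blast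
qed

lemma twr_subfld: "twr K \<Longrightarrow> subfld K"
proof (induction rule: twr.induct)
  case twr_Q
  then show ?case unfolding subfld_def by (auto intro: Rats_add Rats_mult Rats_minus_iff Rats_inverse)
next
  case (twr_ext K k)
  then show ?case using subfld_ext by blast
qed

lemma rat_cube: "(x::real) \<in> \<rat> \<Longrightarrow> x ^ 3 = 2 \<Longrightarrow> False"
proof -
  assume x: "x \<in> \<rat>" "x ^ 3 = 2"
  obtain m n :: nat where n: "n \<noteq> 0" "\<bar>x\<bar> = real m / real n" "coprime m n"
    using Rats_abs_nat_div_natE[OF x(1)] by metis
  have "x > 0" using x(2) zero_less_power_eq[of x 3] by simp
  hence "x = real m / real n" using n by simp
  hence "real m = x * real n" using n(1) by simp
  hence "real m ^ 3 = x ^ 3 * real n ^ 3" by (simp add: power_mult_distrib)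
  hence "real m ^ 3 = 2 * real n ^ 3" using x(2) by simp
  hence mn: "m ^ 3 = 2 * n ^ 3" by (metis of_nat_eq_iff of_nat_mult of_nat_numeral of_nat_power)
  hence "2 dvd m ^ 3" by simp
  hence "2 dvd m" by (simp add: prime_dvd_power)
  then obtain j where "m = 2 * j" by blast
  with mn have "4 * j ^ 3 = n ^ 3" by (simp add: power_mult_distrib)
  hence "n ^ 3 = 2 * (2 * j ^ 3)" by simp
  hence "2 dvd n ^ 3" by (metis dvd_triv_left)
  hence "2 dvd n" by (simp add: prime_dvd_power)
  have "(2::nat) = 1" using coprime_common_divisor_nat[OF n(3) \<open>2 dvd m\<close> \<open>2 dvd n\<close>] .
  then show False by simp
qed

lemma cube_plus: fixes a b s :: real shows "(a + b * s) ^ 3 = a ^ 3 + 3 * a ^ 2 * b * s + 3 * a * b ^ 2 * (s * s) + b ^ 3 * (s * s) * s"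
  by (simp add: power3_eq_cube power2_eq_square algebra_simps)
lemma cube_minus: fixes a b s :: real shows "(a - b * s) ^ 3 = a ^ 3 - 3 * a ^ 2 * b * s + 3 * a * b ^ 2 * (s * s) - b ^ 3 * (s * s) * s"
  by (simp add: power3_eq_cube power2_eq_square algebra_simps)
lemma solve_s: fixes A B s :: real shows "B \<noteq> 0 \<Longrightarrow> 2 = A + B * s \<Longrightarrow> s = (2 - A) * inverse B"
  by (simp add: field_simps)
lemma cube_pos: "(z::real) ^ 3 = 2 \<Longrightarrow> z > 0"
  using zero_less_power_eq[of z 3] by simp
lemma cube_inj: "(x::real) ^ 3 = 2 \<Longrightarrow> y ^ 3 = 2 \<Longrightarrow> x = y"
  using power_eq_imp_eq_base[of x 3 y] cube_pos[of x] cube_pos[of y] by simp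

lemma twr_cube: "twr K \<Longrightarrow> x \<in> K \<Longrightarrow> x ^ 3 = 2 \<Longrightarrow> False"
proof (induction arbitrary: x rule: twr.induct)
  case twr_Q
  then show ?case using rat_cube by blast
next
  case (twr_ext K k)
  have K: "subfld K" using twr_ext.hyps(1) twr_subfld by blast
  have add: "x \<in> K \<Longrightarrow> y \<in> K \<Longrightarrow> x + y \<in> K" for x y using K unfolding subfld_def by blast
  have mul: "x \<in> K \<Longrightarrow> y \<in> K \<Longrightarrow> x * y \<in> K" for x y using K unfolding subfld_def by blast
  have neg: "x \<in> K \<Longrightarrow> - x \<in> K" for x using K unfolding subfld_def by blast
  have inv: "x \<in> K \<Longrightarrow> inverse x \<in> K" for x using K unfolding subfld_def by blast
  have Q: "\<rat> \<subseteq> K" using K unfolding subfld_def by blast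
  define s where "s = sqrt k"
  have ss: "s * s = k" using twr_ext.hyps(3) unfolding s_def by simp
  obtain a b where x: "x = a + b * s" "a \<in> K" "b \<in> K" using twr_ext.prems(1) unfolding s_def by blast
  have x3: "x ^ 3 = 2" by (rule twr_ext.prems(2))
  show ?case
  proof (cases "s \<in> K")
    case True
    then have "x \<in> K" using x add mul by simp
    then show ?thesis using twr_ext.IH x3 by blast
  next
    case False
    define A where "A = a ^ 3 + 3 * a * b ^ 2 * k"
    define B where "B = 3 * a ^ 2 * b + b ^ 3 * k"
    have three: "(3::real) \<in> K" using Q Rats_number_of by blast
    have two: "(2::real) \<in> K" using Q Rats_number_of by blast
    have AK: "A \<in> K" unfolding A_def power3_eq_cube power2_eq_square
      by (intro add mul x(2) x(3) three twr_ext.hyps(2))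
    have BK: "B \<in> K" unfolding B_def power3_eq_cube power2_eq_square
      by (intro add mul x(2) x(3) three twr_ext.hyps(2))
    have xc: "x ^ 3 = A + B * s" unfolding x(1) cube_plus ss A_def B_def by (simp add: algebra_simps)
    have B0: "B = 0"
    proof (rule ccontr)
      assume Bn: "B \<noteq> 0"
      have "2 = A + B * s" using xc x3 by simp
      hence "s = (2 - A) * inverse B" by (rule solve_s[OF Bn])
      moreover have "2 - A \<in> K" using add[OF two neg[OF AK]] by simp
      ultimately have "s \<in> K" using mul inv BK by simp
      with False show False by simp
    qed
    define y where "y = a - b * s"
    have "y ^ 3 = A - B * s" unfolding y_def cube_minus ss A_def B_def by (simp add: algebra_simps)
    hence y3: "y ^ 3 = 2" using xc x3 B0 by simp
    have "x = y" using cube_inj x3 y3 by blast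
    hence "b * s = 0" unfolding y_def x(1) by simp
    hence "x = a" using x(1) by simp
    then show ?thesis using twr_ext.IH x(2) x3 by blast
  qed
qed

lemma twr_Q_sub: "twr K \<Longrightarrow> \<rat> \<subseteq> K"
  using twr_subfld subfld_def by blast

lemma twr_comp: "twr K2 \<Longrightarrow> twr K1 \<Longrightarrow> \<exists>K. twr K \<and> K1 \<subseteq> K \<and> K2 \<subseteq> K"
proof (induction arbitrary: K1 rule: twr.induct)
  case twr_Q
  then have "twr K1 \<and> K1 \<subseteq> K1 \<and> \<rat> \<subseteq> K1" using twr_Q_sub by blast
  then show ?case by (rule exI)
next
  case (twr_ext K2 k)
  then obtain K where K: "twr K" "K1 \<subseteq> K" "K2 \<subseteq> K" by blast
  have kK: "k \<in> K" using K twr_ext by blast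
  let ?E = "{a + b * sqrt k | a b. a \<in> K \<and> b \<in> K}"
  have "twr ?E" using twr.twr_ext[OF K(1) kK twr_ext.hyps(3)] .
  moreover have "K \<subseteq> ?E"
  proof
    fix x assume "x \<in> K"
    moreover have "0 \<in> K" using twr_Q_sub[OF K(1)] by auto
    moreover have "x = x + 0 * sqrt k" by simp
    ultimately show "x \<in> ?E" by blast
  qed
  moreover have "{a + b * sqrt k | a b. a \<in> K2 \<and> b \<in> K2} \<subseteq> ?E"
  proof
    fix x assume "x \<in> {a + b * sqrt k | a b. a \<in> K2 \<and> b \<in> K2}"
    then obtain a b where "x = a + b * sqrt k" "a \<in> K2" "b \<in> K2" by blast
    then show "x \<in> ?E" using K(3) by blast
  qed
  ultimately have "twr ?E \<and> K1 \<subseteq> ?E \<and> {a + b * sqrt k | a b. a \<in> K2 \<and> b \<in> K2} \<subseteq> ?E"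
    using K(2) by (meson order_trans)
  then show ?case by (rule exI)
qed

definition FF :: "real set" where "FF = {x. \<exists>K. twr K \<and> x \<in> K}"

lemma FF_two: "x \<in> FF \<Longrightarrow> y \<in> FF \<Longrightarrow> \<exists>K. twr K \<and> x \<in> K \<and> y \<in> K"
proof -
  assume "x \<in> FF" "y \<in> FF"
  then obtain K1 K2 where "twr K1" "x \<in> K1" "twr K2" "y \<in> K2" unfolding FF_def by blast
  then obtain K where "twr K" "K1 \<subseteq> K" "K2 \<subseteq> K" using twr_comp by metis
  then show ?thesis using \<open>x \<in> K1\<close> \<open>y \<in> K2\<close> by blast
qed

lemma twr_add: "twr K \<Longrightarrow> x \<in> K \<Longrightarrow> y \<in> K \<Longrightarrow> x + y \<in> K"
  using twr_subfld unfolding subfld_def by simp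
lemma twr_mult: "twr K \<Longrightarrow> x \<in> K \<Longrightarrow> y \<in> K \<Longrightarrow> x * y \<in> K"
  using twr_subfld unfolding subfld_def by simp
lemma twr_uminus: "twr K \<Longrightarrow> x \<in> K \<Longrightarrow> - x \<in> K"
  using twr_subfld unfolding subfld_def by simp
lemma twr_inverse: "twr K \<Longrightarrow> x \<in> K \<Longrightarrow> inverse x \<in> K"
  using twr_subfld unfolding subfld_def by simp

lemma FF_I: "twr K \<Longrightarrow> x \<in> K \<Longrightarrow> x \<in> FF"
  unfolding FF_def by blast

lemma FF_add: "x \<in> FF \<Longrightarrow> y \<in> FF \<Longrightarrow> x + y \<in> FF"
  by (metis FF_two FF_I twr_add)

lemma FF_mult: "x \<in> FF \<Longrightarrow> y \<in> FF \<Longrightarrow> x * y \<in> FF"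
  by (metis FF_two FF_I twr_mult)

lemma FF_uminus: "x \<in> FF \<Longrightarrow> - x \<in> FF"
  by (metis FF_two FF_I twr_uminus)

lemma FF_inverse: "x \<in> FF \<Longrightarrow> inverse x \<in> FF"
  by (metis FF_two FF_I twr_inverse)

lemma FF_Rats: "x \<in> \<rat> \<Longrightarrow> x \<in> FF"
  by (rule FF_I[OF twr_Q])

lemma FF_diff: "x \<in> FF \<Longrightarrow> y \<in> FF \<Longrightarrow> x - y \<in> FF"
  using FF_add FF_uminus by (metis diff_conv_add_uminus)

lemma FF_divide: "x \<in> FF \<Longrightarrow> y \<in> FF \<Longrightarrow> x / y \<in> FF"
  using FF_mult FF_inverse by (metis divide_inverse)

lemma FF_numeral [simp]: "numeral n \<in> FF" "0 \<in> FF" "1 \<in> FF"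
  using FF_Rats by auto

lemma FF_sqrt: "x \<in> FF \<Longrightarrow> 0 \<le> x \<Longrightarrow> sqrt x \<in> FF"
proof -
  assume "x \<in> FF" "0 \<le> x"
  then obtain K where K: "twr K" "x \<in> K" unfolding FF_def by blast
  have "twr {a + b * sqrt x | a b. a \<in> K \<and> b \<in> K}" using twr_ext K \<open>0 \<le> x\<close> by blast
  moreover have "0 \<in> K" "1 \<in> K" using twr_Q_sub[OF K(1)] by auto
  moreover have "sqrt x = 0 + 1 * sqrt x" by simp
  ultimately have "sqrt x \<in> {a + b * sqrt x | a b. a \<in> K \<and> b \<in> K}" by blast
  then show ?thesis unfolding FF_def using \<open>twr {a + b * sqrt x | a b. a \<in> K \<and> b \<in> K}\<close> by blast
qed

lemma FF_cube: "x \<in> FF \<Longrightarrow> x ^ 3 = 2 \<Longrightarrow> False"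
  unfolding FF_def using twr_cube by auto

lemmas FF_ops = FF_add FF_mult FF_uminus FF_diff FF_divide FF_numeral FF_inverse




definition lin :: "real \<Rightarrow> real \<Rightarrow> real \<Rightarrow> point set" where
  "lin a b c = {x. a * fst x + b * snd x = c}"

lemma lin_mem: "x \<in> lin a b c \<longleftrightarrow> a * fst x + b * snd x = c"
  unfolding lin_def by simp

lemma lin_hyper: "lin a b c = {x. inner (a, b) x = c}"
  unfolding lin_def by (simp add: inner_prod_def)

lemma lin_closed: "closed (lin a b c)"
  unfolding lin_hyper by (rule closed_hyperplane)

lemma lin_convex: "convex (lin a b c)"
  unfolding lin_hyper by (rule convex_hyperplane)

lemma lin_scale: "l \<noteq> 0 \<Longrightarrow> lin (l * a) (l * b) (l * c) = lin a b c"
proof (rule set_eqI)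
  fix x :: point assume l: "l \<noteq> 0"
  have "x \<in> lin (l * a) (l * b) (l * c) \<longleftrightarrow> l * (a * fst x + b * snd x) = l * c"
    unfolding lin_mem by (simp add: algebra_simps)
  also have "\<dots> \<longleftrightarrow> x \<in> lin a b c" unfolding lin_mem using l by simp
  finally show "x \<in> lin (l * a) (l * b) (l * c) \<longleftrightarrow> x \<in> lin a b c" .
qed

lemma line_lin:
  assumes "p \<noteq> q"
  shows "line_through p q = lin (snd q - snd p) (fst p - fst q) ((snd q - snd p) * fst p + (fst p - fst q) * snd p)"
proof (rule set_eqI)
  fix x :: point
  obtain p1 p2 where p: "p = (p1, p2)" by (cases p)
  obtain q1 q2 where q: "q = (q1, q2)" by (cases q)
  obtain x1 x2 where x: "x = (x1, x2)" by (cases x)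
  have "x \<in> line_through p q \<longleftrightarrow> (\<exists>t. x1 = p1 + t * (q1 - p1) \<and> x2 = p2 + t * (q2 - p2))"
    unfolding line_through_def p q x by auto
  also have "\<dots> \<longleftrightarrow> (q2 - p2) * x1 + (p1 - q1) * x2 = (q2 - p2) * p1 + (p1 - q1) * p2"
  proof
    assume "\<exists>t. x1 = p1 + t * (q1 - p1) \<and> x2 = p2 + t * (q2 - p2)"
    then obtain t where e1: "x1 = p1 + t * (q1 - p1)" and e2: "x2 = p2 + t * (q2 - p2)" by blast
    show "(q2 - p2) * x1 + (p1 - q1) * x2 = (q2 - p2) * p1 + (p1 - q1) * p2"
      by (subst e1, subst e2) (simp add: algebra_simps)
  next
    assume eq: "(q2 - p2) * x1 + (p1 - q1) * x2 = (q2 - p2) * p1 + (p1 - q1) * p2"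
    show "\<exists>t. x1 = p1 + t * (q1 - p1) \<and> x2 = p2 + t * (q2 - p2)"
    proof (cases "q1 = p1")
      case False
      have e2: "(x2 - p2) * (q1 - p1) = (x1 - p1) * (q2 - p2)" using eq by (simp add: algebra_simps)
      show ?thesis
      proof (intro exI conjI)
        show "x1 = p1 + (x1 - p1) / (q1 - p1) * (q1 - p1)" using False by simp
        have "(x1 - p1) / (q1 - p1) * (q2 - p2) = x2 - p2"
          using False e2 by (simp add: field_simps)
        then show "x2 = p2 + (x1 - p1) / (q1 - p1) * (q2 - p2)" by simp
      qed
    next
      case True
      then have "q2 \<noteq> p2" using assms p q by simp
      have e2: "x1 = p1" using eq True \<open>q2 \<noteq> p2\<close> by simp
      show ?thesis
      proof (intro exI conjI)
        show "x1 = p1 + (x2 - p2) / (q2 - p2) * (q1 - p1)" using True e2 by simp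
        show "x2 = p2 + (x2 - p2) / (q2 - p2) * (q2 - p2)" using \<open>q2 \<noteq> p2\<close> by simp
      qed
    qed
  qed
  also have "\<dots> \<longleftrightarrow> x \<in> lin (snd q - snd p) (fst p - fst q) ((snd q - snd p) * fst p + (fst p - fst q) * snd p)"
    unfolding lin_mem p q x by simp
  finally show "x \<in> line_through p q \<longleftrightarrow> x \<in> lin (snd q - snd p) (fst p - fst q) ((snd q - snd p) * fst p + (fst p - fst q) * snd p)" .
qed

lemma is_line_lin: "is_line M \<Longrightarrow> \<exists>a b c. (a \<noteq> 0 \<or> b \<noteq> 0) \<and> M = lin a b c"
proof -
  assume "is_line M"
  then obtain p q where pq: "p \<noteq> q" "M = line_through p q" unfolding is_line_def by blast
  have "snd q - snd p \<noteq> 0 \<or> fst p - fst q \<noteq> 0"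
  proof (rule ccontr)
    assume "\<not> (snd q - snd p \<noteq> 0 \<or> fst p - fst q \<noteq> 0)"
    hence "p = q" by (simp add: prod_eq_iff)
    with pq(1) show False by simp
  qed
  then show ?thesis using line_lin[OF pq(1)] pq(2) by blast
qed

lemma lin_line:
  assumes ab: "a \<noteq> 0 \<or> b \<noteq> 0"
  shows "\<exists>p q. p \<noteq> q \<and> lin a b c = line_through p q \<and>
     (a \<in> FF \<longrightarrow> b \<in> FF \<longrightarrow> c \<in> FF \<longrightarrow> p \<in> FF \<times> FF \<and> q \<in> FF \<times> FF)"
proof (cases "b = 0")
  case False
  define p :: point where "p = (0, c / b)"
  define q :: point where "q = (1, (c - a) / b)"
  have pq: "p \<noteq> q" unfolding p_def q_def by simp
  have "lin a b c = lin (snd q - snd p) (fst p - fst q) ((snd q - snd p) * fst p + (fst p - fst q) * snd p)"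
  proof -
    have "lin (snd q - snd p) (fst p - fst q) ((snd q - snd p) * fst p + (fst p - fst q) * snd p)
        = lin (- inverse b * a) (- inverse b * b) (- inverse b * c)"
      unfolding p_def q_def using False by (simp add: field_simps)
    also have "\<dots> = lin a b c" using False by (intro lin_scale) simp
    finally show ?thesis by simp
  qed
  then show ?thesis using line_lin[OF pq] pq unfolding p_def q_def by (force intro: FF_ops)
next
  case True
  then have a: "a \<noteq> 0" using ab by simp
  define p :: point where "p = (c / a, 0)"
  define q :: point where "q = (c / a, 1)"
  have pq: "p \<noteq> q" unfolding p_def q_def by simp
  have "lin a b c = lin (snd q - snd p) (fst p - fst q) ((snd q - snd p) * fst p + (fst p - fst q) * snd p)"
  proof -
    have "lin (snd q - snd p) (fst p - fst q) ((snd q - snd p) * fst p + (fst p - fst q) * snd p)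
        = lin (inverse a * a) (inverse a * b) (inverse a * c)"
      unfolding p_def q_def using True a by (simp add: field_simps)
    also have "\<dots> = lin a b c" using a by (intro lin_scale) simp
    finally show ?thesis by simp
  qed
  then show ?thesis using line_lin[OF pq] pq unfolding p_def q_def by (force intro: FF_ops)
qed

lemma lin_is_line: "a \<noteq> 0 \<or> b \<noteq> 0 \<Longrightarrow> is_line (lin a b c)"
  using lin_line[of a b c] unfolding is_line_def by blast

lemma lin_nonempty: "a \<noteq> 0 \<or> b \<noteq> 0 \<Longrightarrow> lin a b c \<noteq> {}"
  using lin_line[of a b c] unfolding line_through_def by blast

lemma dist_pt: "dist (x::point) y = sqrt ((fst x - fst y)^2 + (snd x - snd y)^2)"
  unfolding dist_prod_def dist_real_def by simp



lemma cramer: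
  assumes "x \<in> lin a1 b1 c1" "x \<in> lin a2 b2 c2" "a1 * b2 - a2 * b1 \<noteq> 0"
  shows "fst x = (c1 * b2 - c2 * b1) / (a1 * b2 - a2 * b1)" "snd x = (a1 * c2 - a2 * c1) / (a1 * b2 - a2 * b1)"
proof -
  have e1: "a1 * fst x + b1 * snd x = c1" and e2: "a2 * fst x + b2 * snd x = c2" using assms(1,2) lin_mem by auto
  have "fst x * (a1 * b2 - a2 * b1) = c1 * b2 - c2 * b1"
    by (subst e1[symmetric], subst e2[symmetric]) (simp add: algebra_simps)
  then show "fst x = (c1 * b2 - c2 * b1) / (a1 * b2 - a2 * b1)" using assms(3) by (simp add: field_simps)
  have "snd x * (a1 * b2 - a2 * b1) = a1 * c2 - a2 * c1"
    by (subst e1[symmetric], subst e2[symmetric]) (simp add: algebra_simps)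
  then show "snd x = (a1 * c2 - a2 * c1) / (a1 * b2 - a2 * b1)" using assms(3) by (simp add: field_simps)
qed

lemma perp_aux:
  fixes a1 b1 a2 b2 u v :: real
  assumes "a1 * b2 = a2 * b1" "a2 \<noteq> 0 \<or> b2 \<noteq> 0" "a2 * u + b2 * v = 0"
  shows "a1 * u + b1 * v = 0"
proof -
  have 1: "a2 * (a1 * u + b1 * v) = a1 * (a2 * u + b2 * v) + (a2 * b1 - a1 * b2) * v" by (simp add: algebra_simps)
  have 2: "b2 * (a1 * u + b1 * v) = b1 * (a2 * u + b2 * v) + (a1 * b2 - a2 * b1) * u" by (simp add: algebra_simps)
  have "a2 * (a1 * u + b1 * v) = 0" "b2 * (a1 * u + b1 * v) = 0" using 1 2 assms(1,3) by simp_all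
  then show ?thesis using assms(2) by auto
qed

lemma lin_eq:
  assumes n1: "a1 \<noteq> 0 \<or> b1 \<noteq> 0" and n2: "a2 \<noteq> 0 \<or> b2 \<noteq> 0"
    and x: "x \<in> lin a1 b1 c1" "x \<in> lin a2 b2 c2" and D: "a1 * b2 = a2 * b1"
  shows "lin a1 b1 c1 = lin a2 b2 c2"
proof (rule set_eqI)
  fix y :: point
  have e1: "c1 = a1 * fst x + b1 * snd x" and e2: "c2 = a2 * fst x + b2 * snd x" using x lin_mem by auto
  have "y \<in> lin a1 b1 c1 \<longleftrightarrow> a1 * (fst y - fst x) + b1 * (snd y - snd x) = 0"
    unfolding lin_mem e1 by (simp add: algebra_simps)
  also have "\<dots> \<longleftrightarrow> a2 * (fst y - fst x) + b2 * (snd y - snd x) = 0"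
    using perp_aux[OF D n2] perp_aux[OF D[symmetric] n1] by blast
  also have "\<dots> \<longleftrightarrow> y \<in> lin a2 b2 c2"
    unfolding lin_mem e2 by (simp add: algebra_simps)
  finally show "y \<in> lin a1 b1 c1 \<longleftrightarrow> y \<in> lin a2 b2 c2" .
qed

lemma two_points_eq:
  assumes n1: "a1 \<noteq> 0 \<or> b1 \<noteq> 0" and n2: "a2 \<noteq> 0 \<or> b2 \<noteq> 0"
    and u: "u \<in> lin a1 b1 c1" "u \<in> lin a2 b2 c2" and v: "v \<in> lin a1 b1 c1" "v \<in> lin a2 b2 c2"
    and uv: "u \<noteq> v"
  shows "lin a1 b1 c1 = lin a2 b2 c2"
proof (cases "a1 * b2 - a2 * b1 = 0")
  case True
  then show ?thesis using lin_eq[OF n1 n2 u] by simp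
next
  case False
  have "fst u = fst v" "snd u = snd v" using cramer[OF u False] cramer[OF v False] by simp_all
  then have "u = v" by (simp add: prod_eq_iff)
  with uv show ?thesis by simp
qed

lemma sq_aux:
  fixes a b t u v :: real
  assumes "a * u + b * v = 0"
  shows "(a * t)^2 + (b * t)^2 \<le> (a * t + u)^2 + (b * t + v)^2"
proof -
  have "(a * t + u)^2 + (b * t + v)^2 = (a * t)^2 + (b * t)^2 + 2 * t * (a * u + b * v) + (u^2 + v^2)"
    by (simp add: algebra_simps power2_eq_square)
  then show ?thesis using assms by simp
qed

definition foot :: "real \<Rightarrow> real \<Rightarrow> real \<Rightarrow> point \<Rightarrow> point" where
  "foot a b c x = (fst x - a * ((a * fst x + b * snd x - c) / (a^2 + b^2)),
                   snd x - b * ((a * fst x + b * snd x - c) / (a^2 + b^2)))"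

lemma N_pos: "a \<noteq> 0 \<or> b \<noteq> 0 \<Longrightarrow> (a::real)^2 + b^2 > 0"
proof -
  assume n: "a \<noteq> 0 \<or> b \<noteq> 0"
  have "a^2 + b^2 \<noteq> 0" using n by (simp add: sum_power2_eq_zero_iff)
  moreover have "a^2 + b^2 \<ge> 0" by simp
  ultimately show ?thesis by (simp add: order_less_le)
qed

lemma foot_in:
  assumes n: "a \<noteq> 0 \<or> b \<noteq> 0"
  shows "foot a b c x \<in> lin a b c"
proof -
  have N: "a^2 + b^2 \<noteq> 0" using N_pos[OF n] by linarith
  define t where "t = (a * fst x + b * snd x - c) / (a^2 + b^2)"
  have "a * (fst x - a * t) + b * (snd x - b * t) = (a * fst x + b * snd x) - (a^2 + b^2) * t"
    by (simp add: algebra_simps power2_eq_square)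
  also have "\<dots> = c" using N unfolding t_def by simp
  finally show ?thesis unfolding lin_mem foot_def t_def[symmetric] by simp
qed

lemma foot_closest:
  assumes n: "a \<noteq> 0 \<or> b \<noteq> 0"
  shows "closest_point (lin a b c) x = foot a b c x"
proof -
  define t where "t = (a * fst x + b * snd x - c) / (a^2 + b^2)"
  have f: "foot a b c x = (fst x - a * t, snd x - b * t)" unfolding foot_def t_def ..
  have "\<forall>z\<in>lin a b c. dist x (foot a b c x) \<le> dist x z"
  proof
    fix z assume z: "z \<in> lin a b c"
    define u where "u = fst (foot a b c x) - fst z"
    define v where "v = snd (foot a b c x) - snd z"
    have "a * u + b * v = 0" unfolding u_def v_def using z foot_in[OF n, of c x] unfolding lin_mem
      by (simp add: algebra_simps)
    hence le: "(a * t)^2 + (b * t)^2 \<le> (a * t + u)^2 + (b * t + v)^2" by (rule sq_aux)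
    have "dist x (foot a b c x) = sqrt ((a * t)^2 + (b * t)^2)" unfolding dist_pt f by simp
    also have "\<dots> \<le> sqrt ((a * t + u)^2 + (b * t + v)^2)" using le by simp
    also have "\<dots> = dist x z" unfolding dist_pt u_def v_def f by (simp add: algebra_simps)
    finally show "dist x (foot a b c x) \<le> dist x z" .
  qed
  then show ?thesis using closest_point_unique[OF lin_convex lin_closed foot_in[OF n]] by simp
qed

lemma infdist_lin:
  assumes n: "a \<noteq> 0 \<or> b \<noteq> 0"
  shows "infdist x (lin a b c) = \<bar>a * fst x + b * snd x - c\<bar> / sqrt (a^2 + b^2)"
proof -
  define N where "N = a^2 + b^2"
  have N: "N > 0" unfolding N_def using N_pos[OF n] .
  define t where "t = (a * fst x + b * snd x - c) / N"
  have "infdist x (lin a b c) = dist x (closest_point (lin a b c) x)"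
    unfolding infdist_eq_setdist using setdist_closest_point[OF lin_closed lin_nonempty[OF n]] by simp
  also have "\<dots> = sqrt ((a * t)^2 + (b * t)^2)" unfolding foot_closest[OF n] dist_pt foot_def t_def N_def by simp
  also have "(a * t)^2 + (b * t)^2 = t^2 * N" unfolding N_def by (simp add: algebra_simps power2_eq_square)
  also have "sqrt (t^2 * N) = \<bar>t\<bar> * sqrt N" by (simp add: real_sqrt_mult)
  also have "\<bar>t\<bar> * sqrt N = \<bar>a * fst x + b * snd x - c\<bar> / sqrt N"
  proof -
    have "sqrt N * sqrt N = N" using N by simp
    then show ?thesis unfolding t_def using N by (simp add: field_simps)
  qed
  finally show ?thesis unfolding N_def .
qed



definition FL :: "point set set" where
  "FL = {L. \<exists>a b c. a \<in> FF \<and> b \<in> FF \<and> c \<in> FF \<and> (a \<noteq> 0 \<or> b \<noteq> 0) \<and> L = lin a b c}"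

lemma FL_I: "a \<in> FF \<Longrightarrow> b \<in> FF \<Longrightarrow> c \<in> FF \<Longrightarrow> a \<noteq> 0 \<or> b \<noteq> 0 \<Longrightarrow> lin a b c \<in> FL"
  unfolding FL_def by blast

lemma FL_E: "L \<in> FL \<Longrightarrow> (\<And>a b c. a \<in> FF \<Longrightarrow> b \<in> FF \<Longrightarrow> c \<in> FF \<Longrightarrow> a \<noteq> 0 \<or> b \<noteq> 0 \<Longrightarrow> L = lin a b c \<Longrightarrow> P) \<Longrightarrow> P"
  unfolding FL_def by blast

lemma FF_sq: "x \<in> FF \<Longrightarrow> x^2 \<in> FF"
  unfolding power2_eq_square by (rule FF_mult)

lemma FL_is_line: "L \<in> FL \<Longrightarrow> is_line L"
  by (erule FL_E) (simp add: lin_is_line)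

lemma FL_inter:
  assumes L1: "L1 \<in> FL" and L2: "L2 \<in> FL" and np: "\<not> parallel_lines L1 L2"
  shows "L1 \<inter> L2 \<subseteq> FF \<times> FF"
proof
  fix x assume x: "x \<in> L1 \<inter> L2"
  obtain a1 b1 c1 where h1: "a1 \<in> FF" "b1 \<in> FF" "c1 \<in> FF" "a1 \<noteq> 0 \<or> b1 \<noteq> 0" "L1 = lin a1 b1 c1" using L1 by (rule FL_E)
  obtain a2 b2 c2 where h2: "a2 \<in> FF" "b2 \<in> FF" "c2 \<in> FF" "a2 \<noteq> 0 \<or> b2 \<noteq> 0" "L2 = lin a2 b2 c2" using L2 by (rule FL_E)
  have ne: "L1 \<noteq> L2" using np unfolding parallel_lines_def by blast
  have x1: "x \<in> lin a1 b1 c1" and x2: "x \<in> lin a2 b2 c2" using x h1(5) h2(5) by auto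
  show "x \<in> FF \<times> FF"
  proof (cases "a1 * b2 - a2 * b1 = 0")
    case True
    then have "lin a1 b1 c1 = lin a2 b2 c2" using lin_eq[OF h1(4) h2(4) x1 x2] by simp
    with ne h1(5) h2(5) show ?thesis by simp
  next
    case False
    have "fst x \<in> FF" unfolding cramer[OF x1 x2 False] by (intro FF_ops h1(1,2,3) h2(1,2,3))
    moreover have "snd x \<in> FF" unfolding cramer[OF x1 x2 False] by (intro FF_ops h1(1,2,3) h2(1,2,3))
    ultimately show ?thesis by (simp add: mem_Times_iff)
  qed
qed

lemma FL_line:
  assumes p: "p \<in> FF \<times> FF" and q: "q \<in> FF \<times> FF" and pq: "p \<noteq> q"
  shows "line_through p q \<in> FL"
proof -
  have n: "snd q - snd p \<noteq> 0 \<or> fst p - fst q \<noteq> 0"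
  proof (rule ccontr)
    assume "\<not> (snd q - snd p \<noteq> 0 \<or> fst p - fst q \<noteq> 0)"
    hence "p = q" by (simp add: prod_eq_iff)
    with pq show False by simp
  qed
  have "fst p \<in> FF" "snd p \<in> FF" "fst q \<in> FF" "snd q \<in> FF" using p q by (auto simp: mem_Times_iff)
  then show ?thesis unfolding line_lin[OF pq] by (intro FL_I n FF_ops)
qed

lemma iff_diff: "(A::real) - B = C - D \<Longrightarrow> (A = B) = (C = D)"
  by (rule iffI) linarith+

lemma perp_lin:
  "perp_bisector p q = lin (2 * (fst q - fst p)) (2 * (snd q - snd p)) ((fst q)^2 + (snd q)^2 - (fst p)^2 - (snd p)^2)"
proof (rule set_eqI)
  fix x :: point
  have "x \<in> perp_bisector p q \<longleftrightarrow> (fst x - fst p)^2 + (snd x - snd p)^2 = (fst x - fst q)^2 + (snd x - snd q)^2"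
    unfolding perp_bisector_def dist_pt by simp
  also have "\<dots> \<longleftrightarrow> 2 * (fst q - fst p) * fst x + 2 * (snd q - snd p) * snd x = (fst q)^2 + (snd q)^2 - (fst p)^2 - (snd p)^2"
    by (rule iff_diff) (simp add: algebra_simps power2_eq_square)
  finally show "x \<in> perp_bisector p q \<longleftrightarrow> x \<in> lin (2 * (fst q - fst p)) (2 * (snd q - snd p)) ((fst q)^2 + (snd q)^2 - (fst p)^2 - (snd p)^2)"
    unfolding lin_mem .
qed

lemma FL_perp:
  assumes p: "p \<in> FF \<times> FF" and q: "q \<in> FF \<times> FF" and pq: "p \<noteq> q"
  shows "perp_bisector p q \<in> FL"
proof -
  have n: "2 * (fst q - fst p) \<noteq> 0 \<or> 2 * (snd q - snd p) \<noteq> 0"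
  proof (rule ccontr)
    assume "\<not> (2 * (fst q - fst p) \<noteq> 0 \<or> 2 * (snd q - snd p) \<noteq> 0)"
    hence "p = q" by (simp add: prod_eq_iff)
    with pq show False by simp
  qed
  have "fst p \<in> FF" "snd p \<in> FF" "fst q \<in> FF" "snd q \<in> FF" using p q by (auto simp: mem_Times_iff)
  then show ?thesis unfolding perp_lin by (intro FL_I n FF_ops FF_sq)
qed

lemma FL_two_points:
  assumes M: "is_line M" and u: "u \<in> M" "u \<in> lin A B C" and v: "v \<in> M" "v \<in> lin A B C" and uv: "u \<noteq> v"
    and F: "A \<in> FF" "B \<in> FF" "C \<in> FF" and nz: "\<not> (A = 0 \<and> B = 0 \<and> C = 0)"
  shows "M \<in> FL"
proof -
  have n: "A \<noteq> 0 \<or> B \<noteq> 0"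
  proof (rule ccontr)
    assume "\<not> (A \<noteq> 0 \<or> B \<noteq> 0)"
    then have "C = 0" using u(2) unfolding lin_mem by simp
    with \<open>\<not> (A \<noteq> 0 \<or> B \<noteq> 0)\<close> nz show False by simp
  qed
  obtain a b c where abc: "a \<noteq> 0 \<or> b \<noteq> 0" "M = lin a b c" using is_line_lin[OF M] by blast
  have "lin a b c = lin A B C" using two_points_eq[OF abc(1) n _ u(2) _ v(2) uv] u(1) v(1) abc(2) by simp
  then show ?thesis using abc(2) FL_I[OF F n] by simp
qed

lemma FL_equi:
  assumes L1: "L1 \<in> FL" and L2: "L2 \<in> FL" and ne: "L1 \<noteq> L2" and M: "equidistant_line L1 L2 M"
  shows "M \<in> FL"
proof -
  obtain a1 b1 c1 where h1: "a1 \<in> FF" "b1 \<in> FF" "c1 \<in> FF" "a1 \<noteq> 0 \<or> b1 \<noteq> 0" "L1 = lin a1 b1 c1" using L1 by (rule FL_E)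
  obtain a2 b2 c2 where h2: "a2 \<in> FF" "b2 \<in> FF" "c2 \<in> FF" "a2 \<noteq> 0 \<or> b2 \<noteq> 0" "L2 = lin a2 b2 c2" using L2 by (rule FL_E)
  define n1 where "n1 = sqrt (a1^2 + b1^2)"
  define n2 where "n2 = sqrt (a2^2 + b2^2)"
  have n1p: "n1 > 0" unfolding n1_def using N_pos[OF h1(4)] by simp
  have n2p: "n2 > 0" unfolding n2_def using N_pos[OF h2(4)] by simp
  have n1F: "n1 \<in> FF" unfolding n1_def by (intro FF_sqrt FF_add FF_sq h1(1,2)) simp
  have n2F: "n2 \<in> FF" unfolding n2_def by (intro FF_sqrt FF_add FF_sq h2(1,2)) simp
  have Ml: "is_line M" and Meq: "\<forall>x\<in>M. infdist x L1 = infdist x L2" using M unfolding equidistant_line_def by auto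
  define G where "G = lin (n2 * a1 - n1 * a2) (n2 * b1 - n1 * b2) (n2 * c1 - n1 * c2)"
  define H where "H = lin (n2 * a1 + n1 * a2) (n2 * b1 + n1 * b2) (n2 * c1 + n1 * c2)"
  have GH: "x \<in> G \<or> x \<in> H" if xM: "x \<in> M" for x
  proof -
    define l1 where "l1 = a1 * fst x + b1 * snd x - c1"
    define l2 where "l2 = a2 * fst x + b2 * snd x - c2"
    have "\<bar>l1\<bar> / n1 = \<bar>l2\<bar> / n2" using Meq xM unfolding h1(5) h2(5) infdist_lin[OF h1(4)] infdist_lin[OF h2(4)]
      l1_def l2_def n1_def n2_def by simp
    hence "\<bar>n2 * l1\<bar> = \<bar>n1 * l2\<bar>" using n1p n2p by (simp add: field_simps abs_mult)
    hence "n2 * l1 = n1 * l2 \<or> n2 * l1 = - (n1 * l2)" by (simp add: abs_eq_iff)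
    moreover have "x \<in> G \<longleftrightarrow> n2 * l1 = n1 * l2" unfolding G_def lin_mem l1_def l2_def
      by (rule iff_diff) (simp add: algebra_simps)
    moreover have "x \<in> H \<longleftrightarrow> n2 * l1 = - (n1 * l2)" unfolding H_def lin_mem l1_def l2_def
      by (rule iff_diff) (simp add: algebra_simps)
    ultimately show ?thesis by blast
  qed
  have nzG: "\<not> (n2 * a1 - n1 * a2 = 0 \<and> n2 * b1 - n1 * b2 = 0 \<and> n2 * c1 - n1 * c2 = 0)"
  proof
    assume z: "n2 * a1 - n1 * a2 = 0 \<and> n2 * b1 - n1 * b2 = 0 \<and> n2 * c1 - n1 * c2 = 0"
    have "a1 = (n1 / n2) * a2" "b1 = (n1 / n2) * b2" "c1 = (n1 / n2) * c2" using z n2p by (simp_all add: field_simps)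
    hence "L1 = lin ((n1 / n2) * a2) ((n1 / n2) * b2) ((n1 / n2) * c2)" using h1(5) by simp
    also have "\<dots> = L2" unfolding h2(5) by (rule lin_scale) (use n1p n2p in simp)
    finally show False using ne by simp
  qed
  have nzH: "\<not> (n2 * a1 + n1 * a2 = 0 \<and> n2 * b1 + n1 * b2 = 0 \<and> n2 * c1 + n1 * c2 = 0)"
  proof
    assume z: "n2 * a1 + n1 * a2 = 0 \<and> n2 * b1 + n1 * b2 = 0 \<and> n2 * c1 + n1 * c2 = 0"
    have "a1 = (- n1 / n2) * a2" "b1 = (- n1 / n2) * b2" "c1 = (- n1 / n2) * c2" using z n2p by (simp_all add: field_simps)
    hence "L1 = lin ((- n1 / n2) * a2) ((- n1 / n2) * b2) ((- n1 / n2) * c2)" using h1(5) by simp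
    also have "\<dots> = L2" unfolding h2(5) by (rule lin_scale) (use n1p n2p in simp)
    finally show False using ne by simp
  qed
  have FG: "n2 * a1 - n1 * a2 \<in> FF" "n2 * b1 - n1 * b2 \<in> FF" "n2 * c1 - n1 * c2 \<in> FF"
    by (intro FF_ops n1F n2F h1(1,2,3) h2(1,2,3))+
  have FH: "n2 * a1 + n1 * a2 \<in> FF" "n2 * b1 + n1 * b2 \<in> FF" "n2 * c1 + n1 * c2 \<in> FF"
    by (intro FF_ops n1F n2F h1(1,2,3) h2(1,2,3))+
  obtain p q where pq: "p \<noteq> q" "M = line_through p q" using Ml unfolding is_line_def by blast
  define m where "m = p + (1/2) *\<^sub>R (q - p)"
  have "p = p + 0 *\<^sub>R (q - p)" by simp
  then have pM: "p \<in> M" unfolding pq(2) line_through_def by blast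
  have "q = p + 1 *\<^sub>R (q - p)" by simp
  then have qM: "q \<in> M" unfolding pq(2) line_through_def by blast
  have mM: "m \<in> M" unfolding pq(2) line_through_def m_def by blast
  have mp: "m \<noteq> p" using pq(1) unfolding m_def by (auto simp: prod_eq_iff)
  have mq: "m \<noteq> q"
  proof
    assume "m = q"
    hence "q - p = (1/2) *\<^sub>R (q - p)" unfolding m_def by (simp add: algebra_simps)
    hence "q - p = 0" by (simp add: prod_eq_iff)
    with pq(1) show False by simp
  qed
  have "(\<exists>u v. u \<noteq> v \<and> u \<in> M \<and> v \<in> M \<and> u \<in> G \<and> v \<in> G) \<or> (\<exists>u v. u \<noteq> v \<and> u \<in> M \<and> v \<in> M \<and> u \<in> H \<and> v \<in> H)"
    using GH[OF pM] GH[OF qM] GH[OF mM] pM qM mM pq(1) mp mq by metis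
  then show ?thesis
  proof
    assume "\<exists>u v. u \<noteq> v \<and> u \<in> M \<and> v \<in> M \<and> u \<in> G \<and> v \<in> G"
    then obtain u v where "u \<noteq> v" "u \<in> M" "v \<in> M" "u \<in> G" "v \<in> G" by blast
    then show ?thesis using FL_two_points[OF Ml _ _ _ _ _ FG nzG] unfolding G_def by blast
  next
    assume "\<exists>u v. u \<noteq> v \<and> u \<in> M \<and> v \<in> M \<and> u \<in> H \<and> v \<in> H"
    then obtain u v where "u \<noteq> v" "u \<in> M" "v \<in> M" "u \<in> H" "v \<in> H" by blast
    then show ?thesis using FL_two_points[OF Ml _ _ _ _ _ FH nzH] unfolding H_def by blast
  qed
qed

lemma reflect_formula:
  assumes n: "a \<noteq> 0 \<or> b \<noteq> 0"
  shows "reflect_pt (lin a b c) y = (fst y - 2 * a * ((a * fst y + b * snd y - c) / (a^2 + b^2)),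
                                     snd y - 2 * b * ((a * fst y + b * snd y - c) / (a^2 + b^2)))"
  unfolding reflect_pt_def foot_closest[OF n] foot_def by (simp add: prod_eq_iff algebra_simps)

lemma FL_refl:
  assumes L1: "L1 \<in> FL" and L2: "L2 \<in> FL"
  shows "reflect_pt L1 ` L2 \<in> FL"
proof -
  obtain a1 b1 c1 where h1: "a1 \<in> FF" "b1 \<in> FF" "c1 \<in> FF" "a1 \<noteq> 0 \<or> b1 \<noteq> 0" "L1 = lin a1 b1 c1" using L1 by (rule FL_E)
  obtain a2 b2 c2 where h2: "a2 \<in> FF" "b2 \<in> FF" "c2 \<in> FF" "a2 \<noteq> 0 \<or> b2 \<noteq> 0" "L2 = lin a2 b2 c2" using L2 by (rule FL_E)
  define N where "N = a1^2 + b1^2"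
  have Np: "N > 0" unfolding N_def by (rule N_pos[OF h1(4)])
  define tt where "tt y = (a1 * fst y + b1 * snd y - c1) / N" for y :: point
  define R where "R y = (fst y - 2 * a1 * tt y, snd y - 2 * b1 * tt y)" for y :: point
  have Rf: "reflect_pt L1 y = R y" for y unfolding h1(5) reflect_formula[OF h1(4)] R_def tt_def N_def ..
  have Ntt: "N * tt y = a1 * fst y + b1 * snd y - c1" for y unfolding tt_def using Np by simp
  have RR: "R (R y) = y" for y
  proof -
    have "N * tt (R y) = a1 * fst (R y) + b1 * snd (R y) - c1" by (rule Ntt)
    also have "\<dots> = (a1 * fst y + b1 * snd y - c1) - 2 * (a1^2 + b1^2) * tt y"
      by (simp add: R_def algebra_simps power2_eq_square)
    also have "\<dots> = N * (- tt y)" using Ntt[of y] by (simp add: N_def algebra_simps)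
    finally have "N * tt (R y) = N * (- tt y)" .
    moreover have N0: "N \<noteq> 0" using Np by simp
    ultimately have "tt (R y) = - tt y" by (rule mult_left_cancel[THEN iffD1, rotated])
    then show ?thesis unfolding R_def[of "R y"] by (simp add: R_def prod_eq_iff)
  qed
  define d where "d = a1 * a2 + b1 * b2"
  define e where "e = d / N"
  define A where "A = a2 - 2 * a1 * e"
  define B where "B = b2 - 2 * b1 * e"
  define C where "C = c2 - 2 * c1 * e"
  have eN: "e * N = d" unfolding e_def using Np by simp
  have Rmem: "R y \<in> L2 \<longleftrightarrow> y \<in> lin A B C" for y
  proof -
    have "R y \<in> L2 \<longleftrightarrow> a2 * (fst y - 2 * a1 * tt y) + b2 * (snd y - 2 * b1 * tt y) = c2"
      unfolding h2(5) lin_mem R_def by simp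
    also have "\<dots> \<longleftrightarrow> A * fst y + B * snd y = C"
    proof (rule iff_diff)
      have "2 * d * tt y = 2 * e * (N * tt y)" unfolding eN[symmetric] by simp
      also have "\<dots> = 2 * e * (a1 * fst y + b1 * snd y - c1)" unfolding Ntt ..
      finally have dt: "2 * d * tt y = 2 * e * (a1 * fst y + b1 * snd y - c1)" .
      have "a2 * (fst y - 2 * a1 * tt y) + b2 * (snd y - 2 * b1 * tt y) - c2 = a2 * fst y + b2 * snd y - c2 - 2 * d * tt y"
        unfolding d_def by (simp add: algebra_simps)
      also have "\<dots> = A * fst y + B * snd y - C" unfolding dt A_def B_def C_def by (simp add: algebra_simps)
      finally show "a2 * (fst y - 2 * a1 * tt y) + b2 * (snd y - 2 * b1 * tt y) - c2 = A * fst y + B * snd y - C" .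
    qed
    finally show ?thesis unfolding lin_mem .
  qed
  have img: "reflect_pt L1 ` L2 = lin A B C"
  proof (rule set_eqI)
    fix y
    show "y \<in> reflect_pt L1 ` L2 \<longleftrightarrow> y \<in> lin A B C"
    proof
      assume "y \<in> reflect_pt L1 ` L2"
      then obtain z where z: "z \<in> L2" "y = R z" using Rf by auto
      then have "R y \<in> L2" using RR by simp
      then show "y \<in> lin A B C" using Rmem by simp
    next
      assume "y \<in> lin A B C"
      then have "R y \<in> L2" using Rmem by simp
      moreover have "y = reflect_pt L1 (R y)" using Rf RR by simp
      ultimately show "y \<in> reflect_pt L1 ` L2" by blast
    qed
  qed
  have nAB: "A \<noteq> 0 \<or> B \<noteq> 0"
  proof (rule ccontr)
    assume "\<not> (A \<noteq> 0 \<or> B \<noteq> 0)"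
    then have a2: "a2 = 2 * a1 * e" and b2: "b2 = 2 * b1 * e" unfolding A_def B_def by simp_all
    have "d = 2 * e * N" unfolding d_def a2 b2 N_def by (simp add: algebra_simps power2_eq_square)
    also have "\<dots> = 2 * (e * N)" by (rule mult.assoc)
    also have "\<dots> = 2 * d" by (simp only: eN)
    finally have "d = 2 * d" .
    then have "d = 0" by simp
    then have "e = 0" unfolding e_def by simp
    then show False using a2 b2 h2(4) by simp
  qed
  have eF: "e \<in> FF" unfolding e_def d_def N_def by (intro FF_ops FF_sq h1(1,2) h2(1,2))
  have F: "A \<in> FF" "B \<in> FF" "C \<in> FF" unfolding A_def B_def C_def
    by (intro FF_ops eF h1(1,2,3) h2(1,2,3))+
  show ?thesis unfolding img by (rule FL_I[OF F nAB])
qed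

lemma FF_pair: "origami_pair (FF \<times> FF) FL"
proof -
  have 1: "\<forall>L\<in>FL. is_line L" by (intro ballI) (rule FL_is_line)
  have 2: "\<forall>L1\<in>FL. \<forall>L2\<in>FL. \<not> parallel_lines L1 L2 \<longrightarrow> L1 \<inter> L2 \<subseteq> FF \<times> FF"
    by (intro ballI impI) (rule FL_inter; assumption)
  have 3: "\<forall>p\<in>FF \<times> FF. \<forall>q\<in>FF \<times> FF. p \<noteq> q \<longrightarrow> line_through p q \<in> FL"
    by (intro ballI impI) (rule FL_line; assumption)
  have 4: "\<forall>p\<in>FF \<times> FF. \<forall>q\<in>FF \<times> FF. p \<noteq> q \<longrightarrow> perp_bisector p q \<in> FL"
    by (intro ballI impI) (rule FL_perp; assumption)
  have 5: "\<forall>L1\<in>FL. \<forall>L2\<in>FL. L1 \<noteq> L2 \<longrightarrow> (\<forall>M. equidistant_line L1 L2 M \<longrightarrow> M \<in> FL)"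
    by (intro ballI impI allI) (rule FL_equi; assumption)
  have 6: "\<forall>L1\<in>FL. \<forall>L2\<in>FL. reflect_pt L1 ` L2 \<in> FL"
    by (intro ballI) (rule FL_refl; assumption)
  show ?thesis unfolding origami_pair_def by (intro conjI 1 2 3 4 5 6)
qed

lemma origami_points_FF: "origami_points \<subseteq> FF \<times> FF"
proof -
  have a: "(0, 0) \<in> FF \<times> FF" "(0, 1) \<in> FF \<times> FF" by (simp_all add: mem_Times_iff)
  have b: "closed_under_origami (FF \<times> FF)" unfolding closed_under_origami_def by (rule exI[of _ FL], rule FF_pair)
  have "FF \<times> FF \<in> {P. (0, 0) \<in> P \<and> (0, 1) \<in> P \<and> closed_under_origami P}"
    by (intro CollectI conjI a b)
  then show ?thesis unfolding origami_points_def by (rule Inter_lower)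
qed

theorem mainTheorem8:
  shows "root 3 2 \<notin> origami_numbers"
proof
  assume "root 3 2 \<in> origami_numbers"
  then have "\<exists>v1\<in>origami_points. \<exists>v2\<in>origami_points. \<bar>root 3 2\<bar> = dist v1 v2"
    unfolding origami_numbers_def by (rule CollectD)
  then obtain v1 v2 where v: "v1 \<in> origami_points" "v2 \<in> origami_points" "\<bar>root 3 2\<bar> = dist v1 v2"
    by blast
  have w1: "v1 \<in> FF \<times> FF" using v(1) origami_points_FF by (rule subsetD[rotated])
  have w2: "v2 \<in> FF \<times> FF" using v(2) origami_points_FF by (rule subsetD[rotated])
  have F: "fst v1 \<in> FF" "snd v1 \<in> FF" "fst v2 \<in> FF" "snd v2 \<in> FF"
    using w1 w2 by (simp_all add: mem_Times_iff)
  have s: "(fst v1 - fst v2)^2 + (snd v1 - snd v2)^2 \<in> FF"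
    by (intro FF_add FF_sq FF_diff F)
  have "dist v1 v2 \<in> FF" unfolding dist_pt by (rule FF_sqrt[OF s]) simp
  moreover have "\<bar>root 3 2\<bar> = root 3 2" by simp
  ultimately have "root 3 2 \<in> FF" using v(3) by simp
  moreover have "root 3 2 ^ 3 = (2::real)" by (simp add: real_root_pow_pos)
  ultimately show False by (rule FF_cube)
qed


end
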